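(* Consider a surviving Galton--Watson fractal model with initial set $J_0$ and contraction ratio $\rho$. If $r\ge \operatorname{diam}(J_0)\rho^n$, then $\operatorname{Fav}(S(r))\ge\operatorname{Fav}(S_n)$. If $0<r\le\varepsilon\rho^n$, then $\operatorname{Fav}(S(r))\le(1+O(\varepsilon))\operatorname{Fav}(S_n)$, where the implicit constant depends only on the model.
   Context: Galton--Watson (GW) fractal model: let $J_0\subset\mathbb{R}^2$ be a compact set equal to the closure of its interior, with finitely many connected components. Let $\mathfrak X=(\mathbf L;h_1(J_0),\dots,h_{\mathbf L}(J_0))$ be a random variable where $\mathbf L\in\{0,1,2,\dots\}$ is bounded, each $h_i$ is a homothety with contraction ratio $\rho\in(0,1)$ and $h_i(J_0)\subset J_0$, and $\mathbb{E}[\mathbf L]=\rho^{-1}$. Set $\mathcal{S}_0=\{J_0\}$, $S_0=J_0$; given $\mathcal{S}_n$, for each $R\in\mathcal{S}_n$ take an independent realization of $\mathfrak X$ and let $\mathcal{S}_{n+1}$ consist of the images $g_R(h^R_i(J_0))$ where $g_R$ is the homothety with $g_R(J_0)=R$; $S_{n+1}=\bigcup\mathcal{S}_{n+1}$, $S=\bigcap_nS_n$, and $S(r)$ is the $r$-neighbourhood of $S$. The model is surviving if $\mathbf L\ge1$ almost surely. $\operatorname{Fav}(A)=\int_0^\pi|\operatorname{proj}_\theta A|\,d\theta$ with $\operatorname{proj}_\theta(x)=\langle x,(-\sin\theta,\cos\theta)\rangle$. *)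

theory Defs
  imports "HOL-Analysis.Analysis" "HOL-Probability.Probability"
begin

text \<open>A configuration (one realization of the random variable X) is a list of
translation vectors b_1..b_L; the i-th homothety is h_i x = rho x + b_i.\<close>

definition homothety :: "real \<Rightarrow> real^2 \<Rightarrow> real^2 \<Rightarrow> real^2" where
  "homothety \<rho> b = (\<lambda>x. \<rho> *\<^sub>R x + b)"

text \<open>A realization of the whole Galton--Watson construction: to every node
(word) w an independent configuration X w is attached.  gw_cells rho X n is the
set of pairs (w, g_w) of level-n words and the homotheties g_w with g_w(J0)=R.\<close>

primrec gw_cells :: "real \<Rightarrow> (nat list \<Rightarrow> (real^2) list) \<Rightarrow> nat
    \<Rightarrow> (nat list \<times> (real^2 \<Rightarrow> real^2)) set" where
  "gw_cells \<rho> X 0 = {([], id)}"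
| "gw_cells \<rho> X (Suc n) =
     {(w @ [i], g \<circ> homothety \<rho> (X w ! i)) | w g i.
        (w, g) \<in> gw_cells \<rho> X n \<and> i < length (X w)}"

definition gw_Sn :: "(real^2) set \<Rightarrow> real \<Rightarrow> (nat list \<Rightarrow> (real^2) list) \<Rightarrow> nat \<Rightarrow> (real^2) set" where
  "gw_Sn J0 \<rho> X n = (\<Union>(w, g) \<in> gw_cells \<rho> X n. g ` J0)"

definition gw_S :: "(real^2) set \<Rightarrow> real \<Rightarrow> (nat list \<Rightarrow> (real^2) list) \<Rightarrow> (real^2) set" where
  "gw_S J0 \<rho> X = (\<Inter>n. gw_Sn J0 \<rho> X n)"

definition nbhd :: "(real^2) set \<Rightarrow> real \<Rightarrow> (real^2) set" where
  "nbhd A r = {x. \<exists>y\<in>A. dist x y \<le> r}"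

definition proj :: "real \<Rightarrow> real^2 \<Rightarrow> real" where
  "proj \<theta> x = x \<bullet> vector [- sin \<theta>, cos \<theta>]"

definition Fav :: "(real^2) set \<Rightarrow> real" where
  "Fav A = integral {0..pi} (\<lambda>\<theta>. measure lebesgue (proj \<theta> ` A))"

end

theory Submission
  imports Defs
begin


lemma cells_form:
  "(w, g) \<in> gw_cells \<rho> X n \<Longrightarrow> \<exists>c. g = (\<lambda>x. \<rho> ^ n *\<^sub>R x + c)"
proof (induction n arbitrary: w g)
  case 0 then show ?case by (auto intro!: exI[of _ 0])
next
  case (Suc n)
  then obtain w' g' i where w: "w = w' @ [i]" "g = g' \<circ> homothety \<rho> (X w' ! i)"
    "(w', g') \<in> gw_cells \<rho> X n" by auto
  then obtain c where "g' = (\<lambda>x. \<rho> ^ n *\<^sub>R x + c)" using Suc.IH by blast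
  then show ?case using w
    by (auto simp: homothety_def fun_eq_iff scaleR_add_right intro!: exI[of _ "\<rho> ^ n *\<^sub>R X w' ! i + c"])
qed

lemma cells_finite: "finite (gw_cells \<rho> X n)"
proof (induction n)
  case 0 then show ?case by simp
next
  case (Suc n)
  have "gw_cells \<rho> X (Suc n) \<subseteq> (\<lambda>((w,g),i). (w @ [i], g \<circ> homothety \<rho> (X w ! i))) `
        (SIGMA p:gw_cells \<rho> X n. {..<length (X (fst p))})"
  proof
    fix x assume "x \<in> gw_cells \<rho> X (Suc n)"
    then obtain w g i where "x = (w @ [i], g \<circ> homothety \<rho> (X w ! i))"
      "(w, g) \<in> gw_cells \<rho> X n" "i < length (X w)" by auto
    then show "x \<in> (\<lambda>((w,g),i). (w @ [i], g \<circ> homothety \<rho> (X w ! i))) `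
        (SIGMA p:gw_cells \<rho> X n. {..<length (X (fst p))})"
      by (intro image_eqI[where x="((w,g),i)"]) auto
  qed
  moreover have "finite (SIGMA p:gw_cells \<rho> X n. {..<length (X (fst p))})"
    using Suc by (intro finite_SigmaI) auto
  ultimately show ?case by (meson finite_imageI finite_subset)
qed

definition good where
  "good J0 \<rho> X \<longleftrightarrow> (\<forall>w. 1 \<le> length (X w) \<and> (\<forall>b\<in>set (X w). homothety \<rho> b ` J0 \<subseteq> J0))"

lemma Sn_Suc_sub:
  assumes "good J0 \<rho> X" shows "gw_Sn J0 \<rho> X (Suc n) \<subseteq> gw_Sn J0 \<rho> X n"
proof
  fix x assume "x \<in> gw_Sn J0 \<rho> X (Suc n)"
  then obtain w g i where wg: "(w, g) \<in> gw_cells \<rho> X n" "i < length (X w)"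
    "x \<in> (g \<circ> homothety \<rho> (X w ! i)) ` J0"
    by (auto simp: gw_Sn_def)
  have "homothety \<rho> (X w ! i) ` J0 \<subseteq> J0" using assms wg(2) nth_mem unfolding good_def by blast
  then have "x \<in> g ` J0" using wg(3) by (auto simp: image_comp[symmetric])
  then show "x \<in> gw_Sn J0 \<rho> X n" using wg(1) by (auto simp: gw_Sn_def)
qed

lemma Sn_mono:
  assumes "good J0 \<rho> X" "n \<le> m" shows "gw_Sn J0 \<rho> X m \<subseteq> gw_Sn J0 \<rho> X n"
  using assms(2)
proof (induction m rule: dec_induct)
  case base then show ?case by simp
next
  case (step m) then show ?case using Sn_Suc_sub[OF assms(1), of m] by blast
qed

lemma Sn_compact:
  assumes "compact J0" shows "compact (gw_Sn J0 \<rho> X n)"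
proof -
  have "compact (g ` J0)" if wg: "(w, g) \<in> gw_cells \<rho> X n" for w g
  proof -
    obtain c where "g = (\<lambda>x. \<rho> ^ n *\<^sub>R x + c)" using cells_form[OF wg] by blast
    then have "continuous_on J0 g" by (auto intro!: continuous_intros)
    then show ?thesis using assms compact_continuous_image by blast
  qed
  then show ?thesis unfolding gw_Sn_def using cells_finite
    by (intro compact_UN) auto
qed

lemma S_compact:
  assumes "compact J0" shows "compact (gw_S J0 \<rho> X)"
proof -
  have "gw_S J0 \<rho> X = gw_Sn J0 \<rho> X 0 \<inter> (\<Inter>n. gw_Sn J0 \<rho> X n)"
    by (auto simp: gw_S_def)
  then show ?thesis using assms Sn_compact
    by (metis closed_INT compact_imp_closed compact_Int_closed)
qed

lemma cell_meets_S:
  assumes "good J0 \<rho> X" "compact J0" "J0 \<noteq> {}" "(w, g) \<in> gw_cells \<rho> X n"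
  shows "\<exists>y\<in>J0. g y \<in> gw_S J0 \<rho> X"
proof -
  define c where "c = rec_nat (w, g) (\<lambda>k p. (fst p @ [0], snd p \<circ> homothety \<rho> (X (fst p) ! 0)))"
  have c0: "c 0 = (w, g)" and cS: "c (Suc k) = (fst (c k) @ [0], snd (c k) \<circ> homothety \<rho> (X (fst (c k)) ! 0))" for k
    by (simp_all add: c_def)
  have len: "0 < length (X v)" for v using assms(1) by (fastforce simp: good_def Suc_le_eq)
  have cin: "c k \<in> gw_cells \<rho> X (n + k)" for k
  proof (induction k)
    case 0 then show ?case using assms(4) c0 by simp
  next
    case (Suc k)
    then show ?case using len[of "fst (c k)"] unfolding cS
      by (auto intro!: exI[of _ "fst (c k)"] exI[of _ "snd (c k)"])
  qed
  define F where "F k = snd (c k) ` J0" for k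
  have Fsub: "F (Suc k) \<subseteq> F k" for k
  proof -
    have "homothety \<rho> (X (fst (c k)) ! 0) ` J0 \<subseteq> J0"
      using assms(1) len[of "fst (c k)"] nth_mem unfolding good_def by blast
    then show ?thesis unfolding F_def cS by (auto simp: image_comp[symmetric])
  qed
  have Fmono: "m \<le> k \<Longrightarrow> F k \<subseteq> F m" for m k
    by (induction k rule: dec_induct) (use Fsub in blast)+
  have Fcomp: "compact (F k)" for k
  proof -
    obtain d where "snd (c k) = (\<lambda>x. \<rho> ^ (n+k) *\<^sub>R x + d)"
      using cells_form[of "fst (c k)" "snd (c k)" \<rho> X "n+k"] cin[of k] by auto
    then have "continuous_on J0 (snd (c k))" by (auto intro!: continuous_intros)
    then show ?thesis unfolding F_def using assms(2) compact_continuous_image by blast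
  qed
  have "\<Inter>(range F) \<noteq> {}"
    by (rule compact_nest) (use Fcomp assms(3) Fmono in \<open>auto simp: F_def\<close>)
  then obtain z where z: "\<And>k. z \<in> F k" by auto
  have FS: "F k \<subseteq> gw_Sn J0 \<rho> X (n + k)" for k
    using cin[of k] unfolding F_def gw_Sn_def by (cases "c k") auto
  have "z \<in> gw_Sn J0 \<rho> X m" for m
  proof (cases "n \<le> m")
    case True then show ?thesis using FS[of "m - n"] z[of "m - n"] by auto
  next
    case False
    then have "z \<in> gw_Sn J0 \<rho> X n" using FS[of 0] z[of 0] by auto
    then show ?thesis using Sn_mono[OF assms(1), of m n] False by auto
  qed
  then have "z \<in> gw_S J0 \<rho> X" by (simp add: gw_S_def)
  moreover have "z \<in> g ` J0" using z[of 0] by (simp add: F_def c0)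
  ultimately show ?thesis by auto
qed



lemma proj_eq: "proj \<theta> x = cos \<theta> * x$2 - sin \<theta> * x$1"
  by (simp add: proj_def inner_vec_def sum_2)

lemma proj_add: "proj \<theta> (x + y) = proj \<theta> x + proj \<theta> y"
  by (simp add: proj_eq algebra_simps)

lemma proj_diff: "proj \<theta> (x - y) = proj \<theta> x - proj \<theta> y"
  by (simp add: proj_eq algebra_simps)

lemma proj_scale: "proj \<theta> (a *\<^sub>R x) = a * proj \<theta> x"
  by (simp add: proj_eq algebra_simps)

lemma norm_u: "norm (vector [- sin \<theta>, cos \<theta>] :: real^2) = 1"
proof -
  have "(vector [- sin \<theta>, cos \<theta>] :: real^2) \<bullet> vector [- sin \<theta>, cos \<theta>] = 1"
    by (simp add: inner_vec_def sum_2 power2_eq_square[symmetric])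
  then show ?thesis by (simp add: norm_eq_sqrt_inner)
qed

lemma proj_u: "proj \<theta> (vector [- sin \<theta>, cos \<theta>]) = 1"
  by (simp add: proj_eq power2_eq_square[symmetric])

lemma proj_le: "\<bar>proj \<theta> x\<bar> \<le> norm x"
  using Cauchy_Schwarz_ineq2[of x "vector [- sin \<theta>, cos \<theta>] :: real^2"]
  by (simp add: proj_def norm_u)

lemma proj_lip: "\<bar>proj \<theta> x - proj \<theta> y\<bar> \<le> dist x y"
  using proj_le[of \<theta> "x - y"] by (simp add: proj_diff dist_norm)

lemma proj_cont: "continuous_on A (\<lambda>p. (fst p, proj (fst p) (snd p)))"
  unfolding proj_eq by (intro continuous_intros)

lemma fav_integrable:
  assumes K: "compact K"
  shows "(\<lambda>\<theta>. measure lebesgue (proj \<theta> ` K)) integrable_on {0..pi}"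
proof -
  define Q where "Q = (\<lambda>p. (fst p, proj (fst p) (snd p))) ` ({0..pi} \<times> K)"
  have "compact Q" unfolding Q_def
    by (intro compact_continuous_image proj_cont compact_Times K) auto
  then have "Q \<in> sets (lborel \<Otimes>\<^sub>M lborel)"
    unfolding lborel_prod by (simp add: borel_compact)
  then have meas: "(\<lambda>\<theta>. emeasure lborel (Pair \<theta> -` Q)) \<in> borel_measurable lborel"
    by (rule lborel.measurable_emeasure_Pair)
  have sec: "Pair \<theta> -` Q = proj \<theta> ` K" if "\<theta> \<in> {0..pi}" for \<theta>
    using that by (auto simp: Q_def image_iff)
  have pc: "compact (proj \<theta> ` K)" for \<theta>
    unfolding proj_eq by (intro compact_continuous_image continuous_intros K)
  have eq: "measure lebesgue (proj \<theta> ` K) = enn2real (emeasure lborel (Pair \<theta> -` Q))"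
    if "\<theta> \<in> {0..pi}" for \<theta>
    using that sec pc by (simp add: measure_def borel_compact)
  have m2: "(\<lambda>\<theta>. enn2real (emeasure lborel (Pair \<theta> -` Q))) \<in> borel_measurable (lebesgue_on {0..pi})"
  proof -
    have "(\<lambda>\<theta>. enn2real (emeasure lborel (Pair \<theta> -` Q))) \<in> borel_measurable lborel"
      using meas by (rule borel_measurable_enn2real)
    then have "(\<lambda>\<theta>. enn2real (emeasure lborel (Pair \<theta> -` Q))) \<in> borel_measurable lebesgue"
      by (rule measurable_completion)
    then show ?thesis by (rule measurable_restrict_space1)
  qed
  have m3: "(\<lambda>\<theta>. measure lebesgue (proj \<theta> ` K)) \<in> borel_measurable (lebesgue_on {0..pi})"
    using m2 by (subst measurable_cong[where g="\<lambda>\<theta>. enn2real (emeasure lborel (Pair \<theta> -` Q))"]) (auto simp: eq)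
  obtain R where R: "\<And>x. x \<in> K \<Longrightarrow> norm x \<le> R" and "R > 0"
    using compact_imp_bounded[OF K] bounded_pos by blast
  have bnd: "norm (measure lebesgue (proj \<theta> ` K)) \<le> 2 * R" for \<theta>
  proof -
    have "proj \<theta> ` K \<subseteq> {-R..R}"
    proof
      fix t assume "t \<in> proj \<theta> ` K"
      then obtain x where "x \<in> K" "t = proj \<theta> x" by auto
      then have "\<bar>t\<bar> \<le> R" using R[of x] proj_le[of \<theta> x] by linarith
      then show "t \<in> {-R..R}" by auto
    qed
    then have "measure lebesgue (proj \<theta> ` K) \<le> measure lebesgue {-R..R}"
      using pc[of \<theta>] lmeasurable_compact[OF pc[of \<theta>]] by (intro measure_mono_fmeasurable) (auto intro: fmeasurableD)
    also have "\<dots> \<le> 2 * R" using \<open>R > 0\<close> by auto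
    finally show ?thesis by simp
  qed
  have "(\<lambda>\<theta>. measure lebesgue (proj \<theta> ` K)) absolutely_integrable_on {0..pi}"
    by (rule measurable_bounded_by_integrable_imp_absolutely_integrable[OF m3 _ _ bnd]) auto
  then show ?thesis by (simp add: absolutely_integrable_on_def)
qed



lemma fringe:
  fixes a b :: "'i \<Rightarrow> real"
  assumes I: "finite I" and L: "L > 0" and ab: "\<And>i. i \<in> I \<Longrightarrow> a i + L \<le> b i" and r: "r \<ge> 0"
  shows "measure lebesgue (\<Union>i\<in>I. {a i - r..b i + r}) \<le> (1 + 2*r/L) * measure lebesgue (\<Union>i\<in>I. {a i..b i})"
proof -
  define A where "A = (\<Union>i\<in>I. {a i..b i})"
  define E where "E = {e \<in> b ` I. \<exists>\<epsilon>>0. \<forall>z. e < z \<and> z < e + \<epsilon> \<longrightarrow> z \<notin> A}"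
  define F where "F = {e \<in> a ` I. \<exists>\<epsilon>>0. \<forall>z. e - \<epsilon> < z \<and> z < e \<longrightarrow> z \<notin> A}"
  have finE: "finite E" unfolding E_def using I by auto
  have finF: "finite F" unfolding F_def using I by auto
  have Acomp: "compact A" unfolding A_def using I by (intro compact_UN) auto
  define UE where "UE = (\<Union>e\<in>E. {e..e+r})"
  define UF where "UF = (\<Union>e\<in>F. {e-r..e})"
  have UEcomp: "compact UE" unfolding UE_def using finE by (intro compact_UN) auto
  have UFcomp: "compact UF" unfolding UF_def using finF by (intro compact_UN) auto
  have cover: "(\<Union>i\<in>I. {a i - r..b i + r}) \<subseteq> A \<union> UE \<union> UF"
  proof
    fix x assume "x \<in> (\<Union>i\<in>I. {a i - r..b i + r})"
    then obtain i where i: "i \<in> I" "a i - r \<le> x" "x \<le> b i + r" by auto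
    show "x \<in> A \<union> UE \<union> UF"
    proof (cases "x \<in> A")
      case True then show ?thesis by auto
    next
      case xA: False
      then have "x \<notin> {a i..b i}" using i(1) by (auto simp: A_def)
      then consider "b i < x" | "x < a i" by force
      then show ?thesis
      proof cases
        case 1
        define e where "e = Max (b ` {j\<in>I. b j < x})"
        have fin: "finite (b ` {j\<in>I. b j < x})" using I by auto
        have ne: "b i \<in> b ` {j\<in>I. b j < x}" using 1 i(1) by auto
        have e_in: "e \<in> b ` {j\<in>I. b j < x}" unfolding e_def using fin ne by (intro Max_in) auto
        have e_ge: "b j \<le> e" if "j \<in> I" "b j < x" for j
          unfolding e_def using fin that by (intro Max_ge) auto
        have ex: "e < x" using e_in by auto
        have "e \<in> E"
        proof -
          have "z \<notin> A" if "e < z" "z < e + (x - e)" for z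
          proof
            assume "z \<in> A"
            then obtain k where k: "k \<in> I" "a k \<le> z" "z \<le> b k" by (auto simp: A_def)
            show False
            proof (cases "b k < x")
              case True then show False using e_ge[OF k(1)] k that by auto
            next
              case False then have "x \<in> A" using k that unfolding A_def
                by (intro UN_I[of k]) auto
              then show False using xA by auto
            qed
          qed
          then show ?thesis unfolding E_def using e_in ex by (auto intro!: exI[of _ "x - e"])
        qed
        moreover have "x \<le> e + r" using e_ge[OF i(1) 1] i by auto
        ultimately have "x \<in> UE" using ex unfolding UE_def by (intro UN_I[of e]) auto
        then show ?thesis by blast
      next
        case 2
        define e where "e = Min (a ` {j\<in>I. x < a j})"
        have fin: "finite (a ` {j\<in>I. x < a j})" using I by auto
        have ne: "a i \<in> a ` {j\<in>I. x < a j}" using 2 i(1) by auto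
        have e_in: "e \<in> a ` {j\<in>I. x < a j}" unfolding e_def using fin ne by (intro Min_in) auto
        have e_le: "e \<le> a j" if "j \<in> I" "x < a j" for j
          unfolding e_def using fin that by (intro Min_le) auto
        have ex: "x < e" using e_in by auto
        have "e \<in> F"
        proof -
          have "z \<notin> A" if "e - (e - x) < z" "z < e" for z
          proof
            assume "z \<in> A"
            then obtain k where k: "k \<in> I" "a k \<le> z" "z \<le> b k" by (auto simp: A_def)
            show False
            proof (cases "x < a k")
              case True then show False using e_le[OF k(1)] k that by auto
            next
              case False then have "x \<in> A" using k that unfolding A_def
                by (intro UN_I[of k]) auto
              then show False using xA by auto
            qed
          qed
          then show ?thesis unfolding F_def using e_in ex by (auto intro!: exI[of _ "e - x"])
        qed
        moreover have "e - r \<le> x" using e_le[OF i(1) 2] i by auto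
        ultimately have "x \<in> UF" using ex unfolding UF_def by (intro UN_I[of e]) auto
        then show ?thesis by blast
      qed
    qed
  qed
  have m1: "measure lebesgue (\<Union>i\<in>I. {a i - r..b i + r}) \<le> measure lebesgue (A \<union> UE \<union> UF)"
  proof (rule measure_mono_fmeasurable)
    show "(\<Union>i\<in>I. {a i - r..b i + r}) \<in> sets lebesgue"
      using I by (intro fmeasurableD lmeasurable_compact compact_UN) auto
    show "A \<union> UE \<union> UF \<in> fmeasurable lebesgue"
      using Acomp UEcomp UFcomp by (intro lmeasurable_compact compact_Un)
  qed (rule cover)
  have m2: "measure lebesgue (A \<union> UE \<union> UF) \<le> measure lebesgue A + measure lebesgue UE + measure lebesgue UF"
  proof -
    have sA: "A \<in> sets lebesgue" and sE: "UE \<in> sets lebesgue" and sF: "UF \<in> sets lebesgue"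
      using Acomp UEcomp UFcomp by (auto intro!: fmeasurableD lmeasurable_compact)
    have "measure lebesgue (A \<union> UE \<union> UF) \<le> measure lebesgue (A \<union> UE) + measure lebesgue UF"
      using sA sE sF by (intro measure_Un_le) auto
    also have "measure lebesgue (A \<union> UE) \<le> measure lebesgue A + measure lebesgue UE"
      using sA sE by (intro measure_Un_le) auto
    finally show ?thesis by simp
  qed
  have m3: "measure lebesgue UE \<le> card E * r"
  proof -
    have "measure lebesgue UE \<le> (\<Sum>e\<in>E. measure lebesgue {e..e+r})"
      unfolding UE_def using finE by (intro measure_UNION_le) auto
    also have "\<dots> = card E * r" using r by simp
    finally show ?thesis .
  qed
  have m4: "measure lebesgue UF \<le> card F * r"
  proof -
    have "measure lebesgue UF \<le> (\<Sum>e\<in>F. measure lebesgue {e-r..e})"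
      unfolding UF_def using finF by (intro measure_UNION_le) auto
    also have "\<dots> = card F * r" using r by simp
    finally show ?thesis .
  qed
  have sepE: "e \<le> e' - L" if th: "e \<in> E" "e' \<in> E" "e < e'" for e e'
  proof (rule ccontr)
    assume nle: "\<not> e \<le> e' - L"
    obtain \<epsilon> where "\<epsilon> > 0" and eps: "\<And>z. e < z \<Longrightarrow> z < e + \<epsilon> \<Longrightarrow> z \<notin> A"
      using th(1) by (auto simp: E_def)
    obtain j where j: "j \<in> I" "e' = b j" using th(2) by (auto simp: E_def)
    define z where "z = (e + min (e + \<epsilon>) e') / 2"
    have "e < z" "z < e + \<epsilon>" "z < e'" using \<open>\<epsilon> > 0\<close> th(3) by (auto simp: z_def)
    moreover have "a j \<le> z" using ab[OF j(1)] j(2) nle \<open>e < z\<close> by linarith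
    ultimately have "z \<in> A" using j unfolding A_def by (intro UN_I[of j]) auto
    then show False using eps \<open>e < z\<close> \<open>z < e + \<epsilon>\<close> by blast
  qed
  have sepF: "e \<le> e' - L" if th: "e \<in> F" "e' \<in> F" "e < e'" for e e'
  proof (rule ccontr)
    assume nle: "\<not> e \<le> e' - L"
    obtain \<epsilon> where "\<epsilon> > 0" and eps: "\<And>z. e' - \<epsilon> < z \<Longrightarrow> z < e' \<Longrightarrow> z \<notin> A"
      using th(2) by (auto simp: F_def)
    obtain j where j: "j \<in> I" "e = a j" using th(1) by (auto simp: F_def)
    define z where "z = (e' + max (e' - \<epsilon>) e) / 2"
    have "z < e'" "e' - \<epsilon> < z" "e < z" using \<open>\<epsilon> > 0\<close> th(3) by (auto simp: z_def)
    moreover have "z \<le> b j" using ab[OF j(1)] j(2) nle \<open>z < e'\<close> by linarith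
    ultimately have "z \<in> A" using j unfolding A_def by (intro UN_I[of j]) auto
    then show False using eps \<open>z < e'\<close> \<open>e' - \<epsilon> < z\<close> by blast
  qed
  have m5: "card E * L \<le> measure lebesgue A"
  proof -
    have "measure lebesgue (\<Union>e\<in>E. {e - L<..<e}) = (\<Sum>e\<in>E. measure lebesgue {e - L<..<e})"
    proof (rule measure_finite_Union[OF finE])
      show "disjoint_family_on (\<lambda>e. {e - L<..<e}) E"
        unfolding disjoint_family_on_def
      proof (intro ballI impI)
        fix e e' assume "e \<in> E" "e' \<in> E" "e \<noteq> e'"
        then consider "e < e'" | "e' < e" by linarith
        then show "{e - L<..<e} \<inter> {e' - L<..<e'} = {}"
        proof cases
          case 1 then have "e \<le> e' - L" using sepE \<open>e \<in> E\<close> \<open>e' \<in> E\<close> by blast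
          then show ?thesis by auto
        next
          case 2 then have "e' \<le> e - L" using sepE \<open>e \<in> E\<close> \<open>e' \<in> E\<close> by blast
          then show ?thesis by auto
        qed
      qed
    qed (use L in auto)
    also have "\<dots> = card E * L" using L by simp
    finally have eq: "measure lebesgue (\<Union>e\<in>E. {e - L<..<e}) = card E * L" .
    have sub: "(\<Union>e\<in>E. {e - L<..<e}) \<subseteq> A"
    proof
      fix x assume "x \<in> (\<Union>e\<in>E. {e - L<..<e})"
      then obtain e where "e \<in> E" "e - L < x" "x < e" by auto
      then obtain j where "j \<in> I" "e = b j" by (auto simp: E_def)
      then show "x \<in> A" using ab[of j] \<open>e - L < x\<close> \<open>x < e\<close> by (force simp: A_def)
    qed
    have "measure lebesgue (\<Union>e\<in>E. {e - L<..<e}) \<le> measure lebesgue A"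
      using sub Acomp finE by (intro measure_mono_fmeasurable sets.finite_UN lmeasurable_compact) auto
    then show ?thesis using eq by simp
  qed
  have m6: "card F * L \<le> measure lebesgue A"
  proof -
    have "measure lebesgue (\<Union>e\<in>F. {e<..<e+L}) = (\<Sum>e\<in>F. measure lebesgue {e<..<e+L})"
    proof (rule measure_finite_Union[OF finF])
      show "disjoint_family_on (\<lambda>e. {e<..<e+L}) F"
        unfolding disjoint_family_on_def
      proof (intro ballI impI)
        fix e e' assume "e \<in> F" "e' \<in> F" "e \<noteq> e'"
        then consider "e < e'" | "e' < e" by linarith
        then show "{e<..<e+L} \<inter> {e'<..<e'+L} = {}"
        proof cases
          case 1 then have "e \<le> e' - L" using sepF \<open>e \<in> F\<close> \<open>e' \<in> F\<close> by blast
          then show ?thesis by auto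
        next
          case 2 then have "e' \<le> e - L" using sepF \<open>e \<in> F\<close> \<open>e' \<in> F\<close> by blast
          then show ?thesis by auto
        qed
      qed
    qed (use L in auto)
    also have "\<dots> = card F * L" using L by simp
    finally have eq: "measure lebesgue (\<Union>e\<in>F. {e<..<e+L}) = card F * L" .
    have sub: "(\<Union>e\<in>F. {e<..<e+L}) \<subseteq> A"
    proof
      fix x assume "x \<in> (\<Union>e\<in>F. {e<..<e+L})"
      then obtain e where "e \<in> F" "e < x" "x < e + L" by auto
      then obtain j where "j \<in> I" "e = a j" by (auto simp: F_def)
      then show "x \<in> A" using ab[of j] \<open>e < x\<close> \<open>x < e + L\<close> by (force simp: A_def)
    qed
    have "measure lebesgue (\<Union>e\<in>F. {e<..<e+L}) \<le> measure lebesgue A"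
      using sub Acomp finF by (intro measure_mono_fmeasurable sets.finite_UN lmeasurable_compact) auto
    then show ?thesis using eq by simp
  qed
  have "r * card E \<le> r * measure lebesgue A / L"
  proof -
    have "r * (card E * L) \<le> r * measure lebesgue A" using m5 r by (rule mult_left_mono)
    then show ?thesis using L by (simp add: field_simps)
  qed
  moreover have "r * card F \<le> r * measure lebesgue A / L"
  proof -
    have "r * (card F * L) \<le> r * measure lebesgue A" using m6 r by (rule mult_left_mono)
    then show ?thesis using L by (simp add: field_simps)
  qed
  ultimately have "measure lebesgue (\<Union>i\<in>I. {a i - r..b i + r}) \<le> measure lebesgue A + 2 * r * measure lebesgue A / L"
  proof -
    have "2 * r * measure lebesgue A / L = r * measure lebesgue A / L + r * measure lebesgue A / L"
      by (simp add: field_simps)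
    then show ?thesis using m1 m2 m3 m4 \<open>r * card E \<le> _\<close> \<open>r * card F \<le> _\<close>
      by (simp only: mult.commute[of "real (card E)"] mult.commute[of "real (card F)"])
  qed
  then show ?thesis by (simp add: A_def field_simps)
qed



lemma component_ball:
  fixes J0 :: "(real^2) set"
  assumes J0c: "compact J0" and reg: "closure (interior J0) = J0" and fin: "finite (components J0)"
    and K: "K \<in> components J0"
  shows "\<exists>z e. e > 0 \<and> cball z e \<subseteq> K"
proof -
  obtain x where x: "x \<in> K" using in_components_nonempty[OF K] by blast
  define U where "U = - \<Union>(components J0 - {K})"
  have "closed (\<Union>(components J0 - {K}))"
    using fin closed_components[OF compact_imp_closed[OF J0c]] by (intro closed_Union) auto
  then have Uo: "open U" by (simp add: U_def open_Compl)
  have xU: "x \<in> U"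
  proof -
    have "x \<notin> C" if "C \<in> components J0 - {K}" for C
      using components_nonoverlap[OF K, of C] that x by auto
    then show ?thesis by (auto simp: U_def)
  qed
  have "x \<in> closure (interior J0)" using reg x in_components_subset[OF K] by auto
  then have "U \<inter> interior J0 \<noteq> {}" using open_Int_closure_eq_empty[OF Uo, of "interior J0"] xU by auto
  then obtain z where z: "z \<in> U" "z \<in> interior J0" by auto
  have "open (U \<inter> interior J0)" using Uo by auto
  then obtain e where e: "e > 0" "ball z e \<subseteq> U \<inter> interior J0" using z by (meson IntI open_contains_ball)
  have zK: "z \<in> K"
  proof -
    have "z \<in> J0" using z interior_subset by auto
    then have "z \<in> \<Union>(components J0)" by simp
    then obtain C where "C \<in> components J0" "z \<in> C" by blast
    then show ?thesis using z(1) by (auto simp: U_def)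
  qed
  have "cball z (e/2) \<subseteq> ball z e" using e(1) by (auto simp: subset_eq)
  then have sub: "cball z (e/2) \<subseteq> J0" using e(2) interior_subset by blast
  have conn: "connected (cball z (e/2))" by (simp add: convex_connected)
  have "z \<in> cball z (e/2)" using e(1) by simp
  then have "cball z (e/2) \<subseteq> K"
    using components_maximal[OF K conn sub] zK by blast
  then show ?thesis using e by (intro exI[of _ z] exI[of _ "e/2"]) auto
qed

lemma components_delta:
  fixes J0 :: "(real^2) set"
  assumes J0c: "compact J0" and reg: "closure (interior J0) = J0" and fin: "finite (components J0)"
  shows "\<exists>\<delta>>0. \<forall>K\<in>components J0. \<exists>z. cball z \<delta> \<subseteq> K"
proof -
  have "\<forall>K\<in>components J0. \<exists>e. e > 0 \<and> (\<exists>z. cball z e \<subseteq> K)"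
    using component_ball[OF assms] by blast
  then obtain f where f: "\<And>K. K \<in> components J0 \<Longrightarrow> f K > 0 \<and> (\<exists>z. cball z (f K) \<subseteq> K)"
    by metis
  define \<delta> where "\<delta> = Min (insert 1 (f ` components J0))"
  have "\<delta> > 0" unfolding \<delta>_def using fin f by (subst Min_gr_iff) auto
  moreover have dle: "\<delta> \<le> f K" if "K \<in> components J0" for K
    unfolding \<delta>_def using fin that by (intro Min_le) auto
  ultimately show ?thesis
  proof (intro exI[of _ \<delta>] conjI ballI)
    fix K assume K: "K \<in> components J0"
    then obtain z where "cball z (f K) \<subseteq> K" using f by blast
    moreover have "cball z \<delta> \<subseteq> cball z (f K)" using dle[OF K] by (rule subset_cball)
    ultimately show "\<exists>z. cball z \<delta> \<subseteq> K" by blast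
  qed
qed



lemma nbhd_compact:
  assumes "compact S" shows "compact (nbhd S r)"
proof -
  have "nbhd S r = {x + y | x y. x \<in> S \<and> y \<in> cball 0 r}"
  proof (intro set_eqI iffI)
    fix x assume "x \<in> nbhd S r"
    then obtain y where "y \<in> S" "dist x y \<le> r" by (auto simp: nbhd_def)
    moreover have "x = y + (x - y)" by simp
    moreover have "x - y \<in> cball 0 r" using \<open>dist x y \<le> r\<close> by (simp add: dist_norm norm_minus_commute)
    ultimately show "x \<in> {x + y | x y. x \<in> S \<and> y \<in> cball 0 r}" by blast
  next
    fix x assume "x \<in> {x + y | x y. x \<in> S \<and> y \<in> cball 0 r}"
    then obtain a b where "x = a + b" "a \<in> S" "norm b \<le> r" by auto
    then show "x \<in> nbhd S r" by (auto simp: nbhd_def dist_norm intro!: bexI[of _ a])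
  qed
  then show ?thesis using compact_sums[OF assms compact_cball, of 0 r] by (simp only:)
qed

lemma proj_compact: "compact K \<Longrightarrow> compact (proj \<theta> ` K)"
  unfolding proj_eq by (intro compact_continuous_image continuous_intros)

lemma measure_mono_compact:
  "A \<subseteq> B \<Longrightarrow> compact B \<Longrightarrow> compact A \<Longrightarrow> measure lebesgue A \<le> measure lebesgue B"
  by (intro measure_mono_fmeasurable) (auto intro: fmeasurableD lmeasurable_compact)

lemma part1:
  assumes good: "good J0 \<rho> X" and J0c: "compact J0" and rho: "0 < \<rho>"
    and r: "diameter J0 * \<rho> ^ n \<le> r"
  shows "Fav (nbhd (gw_S J0 \<rho> X) r) \<ge> Fav (gw_Sn J0 \<rho> X n)"
proof -
  have sub: "gw_Sn J0 \<rho> X n \<subseteq> nbhd (gw_S J0 \<rho> X) r"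
  proof
    fix x assume "x \<in> gw_Sn J0 \<rho> X n"
    then obtain w g y where wg: "(w, g) \<in> gw_cells \<rho> X n" "y \<in> J0" "x = g y"
      by (auto simp: gw_Sn_def)
    then obtain y' where y': "y' \<in> J0" "g y' \<in> gw_S J0 \<rho> X"
      using cell_meets_S[OF good J0c _ wg(1)] by blast
    obtain c where g: "g = (\<lambda>x. \<rho> ^ n *\<^sub>R x + c)" using cells_form[OF wg(1)] by blast
    have "dist x (g y') = \<rho> ^ n * dist y y'"
      using rho by (simp add: wg(3) g dist_norm scaleR_diff_right[symmetric])
    also have "\<dots> \<le> \<rho> ^ n * diameter J0"
      using rho by (intro mult_left_mono diameter_bounded_bound compact_imp_bounded J0c wg(2) y'(1)) auto
    also have "\<dots> \<le> r" using r by (simp add: mult.commute)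
    finally show "x \<in> nbhd (gw_S J0 \<rho> X) r" using y'(2) by (auto simp: nbhd_def)
  qed
  have c1: "compact (gw_Sn J0 \<rho> X n)" using Sn_compact[OF J0c] .
  have c2: "compact (nbhd (gw_S J0 \<rho> X) r)" using nbhd_compact[OF S_compact[OF J0c]] .
  show ?thesis unfolding Fav_def
  proof (rule integral_le[OF fav_integrable[OF c1] fav_integrable[OF c2]])
    fix \<theta> show "measure lebesgue (proj \<theta> ` gw_Sn J0 \<rho> X n) \<le> measure lebesgue (proj \<theta> ` nbhd (gw_S J0 \<rho> X) r)"
      using sub by (intro measure_mono_compact proj_compact c1 c2 image_mono)
  qed
qed



lemma pointwise2:
  assumes good: "good J0 \<rho> X" and J0c: "compact J0" and rho: "0 < \<rho>"
    and fin: "finite (components J0)"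
    and \<delta>: "\<delta> > 0" "\<forall>K\<in>components J0. \<exists>z. cball z \<delta> \<subseteq> K"
    and r: "0 < r" "r \<le> \<epsilon> * \<rho> ^ n"
  shows "measure lebesgue (proj \<theta> ` nbhd (gw_S J0 \<rho> X) r)
           \<le> (1 + (1/\<delta>) * \<epsilon>) * measure lebesgue (proj \<theta> ` gw_Sn J0 \<rho> X n)"
proof -
  define I where "I = gw_cells \<rho> X n \<times> components J0"
  have finI: "finite I" unfolding I_def using fin cells_finite by auto
  have "\<exists>a b. proj \<theta> ` (snd (fst p) ` snd p) = {a..b}" if p: "p \<in> I" for p
  proof -
    obtain w g K where pe: "p = ((w, g), K)" and wg: "(w, g) \<in> gw_cells \<rho> X n" and K: "K \<in> components J0"
      using p unfolding I_def by auto
    obtain c where g: "g = (\<lambda>x. \<rho> ^ n *\<^sub>R x + c)" using cells_form[OF wg] by blast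
    have Kc: "compact K"
      using K J0c by (meson closed_components compact_eq_bounded_closed compact_imp_closed
          in_components_subset bounded_subset)
    have Kconn: "connected K" using K by (rule in_components_connected)
    have "compact (proj \<theta> ` (g ` K))" "connected (proj \<theta> ` (g ` K))"
      unfolding g proj_eq
      by (intro compact_continuous_image connected_continuous_image continuous_intros Kc Kconn)+
    then show ?thesis unfolding pe using connected_compact_interval_1[of "proj \<theta> ` g ` K"] by auto
  qed
  then obtain a b where ab: "\<And>p. p \<in> I \<Longrightarrow> proj \<theta> ` (snd (fst p) ` snd p) = {a p..b p}"
    by metis
  define L where "L = 2 * \<rho> ^ n * \<delta>"
  have L: "L > 0" using rho \<delta> by (simp add: L_def)
  define u :: "real^2" where "u = vector [- sin \<theta>, cos \<theta>]"
  have nu: "norm u = 1" and pu: "proj \<theta> u = 1" by (simp_all add: u_def norm_u proj_u)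
  have abL: "a p + L \<le> b p" if p: "p \<in> I" for p
  proof -
    obtain w g K where pe: "p = ((w, g), K)" and wg: "(w, g) \<in> gw_cells \<rho> X n" and K: "K \<in> components J0"
      using p unfolding I_def by auto
    obtain c where g: "g = (\<lambda>x. \<rho> ^ n *\<^sub>R x + c)" using cells_form[OF wg] by blast
    obtain z where z: "cball z \<delta> \<subseteq> K" using \<delta> K by blast
    have "z + \<delta> *\<^sub>R u \<in> K" "z - \<delta> *\<^sub>R u \<in> K"
      using z \<delta> nu by (auto simp: dist_norm)
    then have "proj \<theta> (g (z + \<delta> *\<^sub>R u)) \<in> {a p..b p}" "proj \<theta> (g (z - \<delta> *\<^sub>R u)) \<in> {a p..b p}"
      using ab[OF p] unfolding pe by auto
    moreover have "proj \<theta> (g (z + \<delta> *\<^sub>R u)) - proj \<theta> (g (z - \<delta> *\<^sub>R u)) = L"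
      by (simp add: g proj_add proj_diff proj_scale pu L_def algebra_simps)
    ultimately show ?thesis by auto
  qed
  have Sn_eq: "gw_Sn J0 \<rho> X n = (\<Union>p\<in>I. snd (fst p) ` snd p)"
  proof (intro set_eqI iffI)
    fix x assume "x \<in> gw_Sn J0 \<rho> X n"
    then obtain w g y where wg: "(w, g) \<in> gw_cells \<rho> X n" "y \<in> J0" "x = g y"
      by (auto simp: gw_Sn_def)
    then have "y \<in> \<Union>(components J0)" by simp
    then obtain K where "K \<in> components J0" "y \<in> K" by blast
    then show "x \<in> (\<Union>p\<in>I. snd (fst p) ` snd p)"
      using wg unfolding I_def by (intro UN_I[of "((w, g), K)"]) auto
  next
    fix x assume "x \<in> (\<Union>p\<in>I. snd (fst p) ` snd p)"
    then obtain w g K where "(w, g) \<in> gw_cells \<rho> X n" "K \<in> components J0" "x \<in> g ` K"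
      unfolding I_def by auto
    then show "x \<in> gw_Sn J0 \<rho> X n"
      unfolding gw_Sn_def using in_components_subset by fastforce
  qed
  have A_eq: "proj \<theta> ` gw_Sn J0 \<rho> X n = (\<Union>p\<in>I. {a p..b p})"
    unfolding Sn_eq image_UN using ab by simp
  have cov: "proj \<theta> ` nbhd (gw_S J0 \<rho> X) r \<subseteq> (\<Union>p\<in>I. {a p - r..b p + r})"
  proof
    fix t assume "t \<in> proj \<theta> ` nbhd (gw_S J0 \<rho> X) r"
    then obtain x y where t: "t = proj \<theta> x" and y: "y \<in> gw_S J0 \<rho> X" and xy: "dist x y \<le> r"
      by (auto simp: nbhd_def)
    have "y \<in> gw_Sn J0 \<rho> X n" using y by (auto simp: gw_S_def)
    then have "proj \<theta> y \<in> (\<Union>p\<in>I. {a p..b p})" using A_eq by blast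
    then obtain p where p: "p \<in> I" "a p \<le> proj \<theta> y" "proj \<theta> y \<le> b p" by auto
    have "\<bar>proj \<theta> x - proj \<theta> y\<bar> \<le> r" using proj_lip[of \<theta> x y] xy by linarith
    then show "t \<in> (\<Union>p\<in>I. {a p - r..b p + r})" using p t by (intro UN_I[of p]) auto
  qed
  have "measure lebesgue (proj \<theta> ` nbhd (gw_S J0 \<rho> X) r) \<le> measure lebesgue (\<Union>p\<in>I. {a p - r..b p + r})"
    using cov finI by (intro measure_mono_compact proj_compact nbhd_compact S_compact J0c compact_UN) auto
  also have "\<dots> \<le> (1 + 2*r/L) * measure lebesgue (\<Union>p\<in>I. {a p..b p})"
    using r(1) by (intro fringe finI L abL) auto
  also have "\<dots> \<le> (1 + (1/\<delta>) * \<epsilon>) * measure lebesgue (\<Union>p\<in>I. {a p..b p})"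
  proof (rule mult_right_mono)
    have "2 * r / L = r / (\<rho> ^ n * \<delta>)" by (simp add: L_def)
    also have "\<dots> \<le> (\<epsilon> * \<rho> ^ n) / (\<rho> ^ n * \<delta>)"
      using r rho \<delta> by (intro divide_right_mono) auto
    also have "\<dots> = (1/\<delta>) * \<epsilon>" using rho by simp
    finally show "1 + 2 * r / L \<le> 1 + (1/\<delta>) * \<epsilon>" by simp
  qed simp
  finally show ?thesis using A_eq by simp
qed

lemma part2:
  assumes good: "good J0 \<rho> X" and J0c: "compact J0" and rho: "0 < \<rho>"
    and fin: "finite (components J0)"
    and \<delta>: "\<delta> > 0" "\<forall>K\<in>components J0. \<exists>z. cball z \<delta> \<subseteq> K"
    and r: "0 < r" "r \<le> \<epsilon> * \<rho> ^ n"
  shows "Fav (nbhd (gw_S J0 \<rho> X) r) \<le> (1 + (1/\<delta>) * \<epsilon>) * Fav (gw_Sn J0 \<rho> X n)"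
proof -
  have c1: "compact (gw_Sn J0 \<rho> X n)" using Sn_compact[OF J0c] .
  have c2: "compact (nbhd (gw_S J0 \<rho> X) r)" using nbhd_compact[OF S_compact[OF J0c]] .
  have int2: "(\<lambda>\<theta>. (1 + (1/\<delta>) * \<epsilon>) * measure lebesgue (proj \<theta> ` gw_Sn J0 \<rho> X n)) integrable_on {0..pi}"
    using integrable_on_cmult_left[OF fav_integrable[OF c1], of "1 + (1/\<delta>) * \<epsilon>"] by simp
  have "Fav (nbhd (gw_S J0 \<rho> X) r) \<le> integral {0..pi} (\<lambda>\<theta>. (1 + (1/\<delta>) * \<epsilon>) * measure lebesgue (proj \<theta> ` gw_Sn J0 \<rho> X n))"
    unfolding Fav_def
    by (rule integral_le[OF fav_integrable[OF c2] int2])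
       (rule pointwise2[OF assms])
  then show ?thesis by (simp add: Fav_def)
qed


theorem lemma3p2:
  fixes J0 :: "(real^2) set" and \<rho> :: real and P :: "(real^2) list measure"
  assumes J0_compact: "compact J0"
    and J0_reg: "closure (interior J0) = J0"
    and J0_comp: "finite (components J0)"
    and rho: "0 < \<rho>" "\<rho> < 1"
    and P_prob: "prob_space P"
    and L_meas: "(\<lambda>c. real (length c)) \<in> borel_measurable P"
    and L_bdd: "\<exists>M. AE c in P. length c \<le> M"
    and L_mean: "integral\<^sup>L P (\<lambda>c. real (length c)) = 1 / \<rho>"
    and maps_in: "AE c in P. \<forall>b\<in>set c. homothety \<rho> b ` J0 \<subseteq> J0"
    and surviving: "AE c in P. 1 \<le> length c"
  shows "\<exists>C>0. \<forall>X. (\<forall>w. 1 \<le> length (X w) \<and>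
                        (\<forall>b\<in>set (X w). homothety \<rho> b ` J0 \<subseteq> J0)) \<longrightarrow>
           (\<forall>n r. diameter J0 * \<rho> ^ n \<le> r \<longrightarrow>
                  Fav (nbhd (gw_S J0 \<rho> X) r) \<ge> Fav (gw_Sn J0 \<rho> X n)) \<and>
           (\<forall>n r \<epsilon>. 0 < r \<and> r \<le> \<epsilon> * \<rho> ^ n \<longrightarrow>
                  Fav (nbhd (gw_S J0 \<rho> X) r) \<le> (1 + C * \<epsilon>) * Fav (gw_Sn J0 \<rho> X n))"
proof -
  obtain \<delta> where \<delta>: "\<delta> > 0" "\<forall>K\<in>components J0. \<exists>z. cball z \<delta> \<subseteq> K"
    using components_delta[OF J0_compact J0_reg J0_comp] by blast
  have main: "(\<forall>n r. diameter J0 * \<rho> ^ n \<le> r \<longrightarrow>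
                  Fav (nbhd (gw_S J0 \<rho> X) r) \<ge> Fav (gw_Sn J0 \<rho> X n)) \<and>
           (\<forall>n r \<epsilon>. 0 < r \<and> r \<le> \<epsilon> * \<rho> ^ n \<longrightarrow>
                  Fav (nbhd (gw_S J0 \<rho> X) r) \<le> (1 + (1/\<delta>) * \<epsilon>) * Fav (gw_Sn J0 \<rho> X n))"
    if H: "\<forall>w. 1 \<le> length (X w) \<and> (\<forall>b\<in>set (X w). homothety \<rho> b ` J0 \<subseteq> J0)" for X
  proof -
    have good: "good J0 \<rho> X" using H by (simp add: good_def)
    show ?thesis
    proof (intro conjI allI impI)
      fix n r assume "diameter J0 * \<rho> ^ n \<le> r"
      then show "Fav (nbhd (gw_S J0 \<rho> X) r) \<ge> Fav (gw_Sn J0 \<rho> X n)"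
        by (rule part1[OF good J0_compact rho(1)])
    next
      fix n r \<epsilon> assume "0 < r \<and> r \<le> \<epsilon> * \<rho> ^ n"
      then show "Fav (nbhd (gw_S J0 \<rho> X) r) \<le> (1 + (1/\<delta>) * \<epsilon>) * Fav (gw_Sn J0 \<rho> X n)"
        using part2[OF good J0_compact rho(1) J0_comp \<delta>] by blast
    qed
  qed
  show ?thesis
    by (rule exI[of _ "1/\<delta>"]) (use \<delta>(1) main in auto)
qed

end
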